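(* Let $S$ be an inductive left $E$-monoid with left $E$-modal operation $\cdot$, and for $s\in S$, $e\in E$ put $s^e=(s\cdot e)s$. Then for all $s,t\in S$ and $e,f\in E$: (ZS1) $(st)\cdot e=s\cdot(t\cdot e)$; (ZS2) $s\cdot(e\wedge f)=(s\cdot e)\wedge(s^e\cdot f)$; (ZS4) $(st)^e=s^{t\cdot e}t^e$. Moreover (ZS3) $(s^e)^f=s^{e\wedge f}$ holds for all $s\in S$, $e,f\in E$ if and only if $E$ has definable meets. In that case the operation $(e,s)\otimes(f,t)=(e\wedge(s\cdot f),(s\cdot f)st)$ on $E\times S$ is associative (giving the Zappa-Szép product $E\bowtie S$), $Rest(E,S)$ is a subsemigroup of $E\bowtie S$ (its multiplication being the restriction of $\otimes$), $\hat E=\{(e,e)\mid e\in E\}$ is a semilattice under $\otimes$ isomorphic to $(E,\wedge)$, and every subsemigroup $T$ of $E\bowtie S$ which is a left restriction semigroup under some unary operation $D$ with $D(T)=\hat E$ is contained in $Rest(E,S)$.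
   Context: For a semigroup $S$, $E(S)$ is its set of idempotents; for $e,f\in E(S)$, $e\le_r f$ iff $e=ef$. $E\subseteq E(S)$ is right pre-reduced if $e=ef$ and $f=fe$ imply $e=f$ for $e,f\in E$. Let $S$ be a monoid and $1\in E\subseteq E(S)$. $S$ is an inductive left $E$-monoid if $E$ is right pre-reduced, $(E,\le_r)$ is a meet-semilattice with meet $\wedge$, and (I1') for all $t\in S$, $e\in E$ there is $t\cdot e\in E$ such that for all $s\in S$: $ste=st$ iff $s(t\cdot e)=s$ (the necessarily unique map $(t,e)\mapsto t\cdot e$ is the left $E$-modal operation); (I2') for $s\in S$, $e,f\in E$: $se=sf=s$ implies $s(e\wedge f)=s$. Such $S$ has definable meets if $(e\cdot f)e\in E$ for all $e,f\in E$. $Rest(E,S)$ is the set $\{(e,s)\in E\times S\mid es=s\}$ with multiplication $(e,s)(f,t)=(e\wedge(s\cdot f),(e\wedge(s\cdot f))st)$ and $D((e,s))=(e,e)$. A left restriction semigroup is a semigroup with unary $D$ satisfying $D(x)x=x$, $D(x)D(y)=D(y)D(x)$, $D(D(x)y)=D(x)D(y)$, $xD(y)=D(xy)x$; $D(T)=\{D(x)\mid x\in T\}$. *)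

theory Defs
  imports Main
begin

text \<open>The monoid S is the type 'a of class monoid_mult; E is a subset of it.\<close>

definition le_r :: "'a::monoid_mult \<Rightarrow> 'a \<Rightarrow> bool" where
  "le_r e f \<longleftrightarrow> e = e * f"

definition right_pre_reduced :: "'a::monoid_mult set \<Rightarrow> bool" where
  "right_pre_reduced E \<longleftrightarrow> (\<forall>e\<in>E. \<forall>f\<in>E. e = e * f \<and> f = f * e \<longrightarrow> e = f)"

definition is_meet :: "'a::monoid_mult set \<Rightarrow> 'a \<Rightarrow> 'a \<Rightarrow> 'a \<Rightarrow> bool" where
  "is_meet E e f m \<longleftrightarrow> m \<in> E \<and> le_r m e \<and> le_r m f \<and>
     (\<forall>g\<in>E. le_r g e \<and> le_r g f \<longrightarrow> le_r g m)"

definition meetE :: "'a::monoid_mult set \<Rightarrow> 'a \<Rightarrow> 'a \<Rightarrow> 'a" where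
  "meetE E e f = (THE m. is_meet E e f m)"

definition is_modal :: "'a::monoid_mult set \<Rightarrow> 'a \<Rightarrow> 'a \<Rightarrow> 'a \<Rightarrow> bool" where
  "is_modal E t e u \<longleftrightarrow> u \<in> E \<and> (\<forall>s. s * t * e = s * t \<longleftrightarrow> s * u = s)"

definition modal :: "'a::monoid_mult set \<Rightarrow> 'a \<Rightarrow> 'a \<Rightarrow> 'a" where
  "modal E t e = (THE u. is_modal E t e u)"

definition inductive_left_E_monoid :: "'a::monoid_mult set \<Rightarrow> bool" where
  "inductive_left_E_monoid E \<longleftrightarrow>
     1 \<in> E \<and> (\<forall>e\<in>E. e * e = e) \<and>
     right_pre_reduced E \<and>
     (\<forall>e\<in>E. \<forall>f\<in>E. \<exists>m. is_meet E e f m) \<and>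
     (\<forall>t. \<forall>e\<in>E. \<exists>u. is_modal E t e u) \<and>
     (\<forall>s. \<forall>e\<in>E. \<forall>f\<in>E. s * e = s \<and> s * f = s \<longrightarrow> s * meetE E e f = s)"

definition definable_meets :: "'a::monoid_mult set \<Rightarrow> bool" where
  "definable_meets E \<longleftrightarrow> (\<forall>e\<in>E. \<forall>f\<in>E. modal E e f * e \<in> E)"

definition restr :: "'a::monoid_mult set \<Rightarrow> 'a \<Rightarrow> 'a \<Rightarrow> 'a" where
  "restr E s e = modal E s e * s"

definition zs_mult :: "'a::monoid_mult set \<Rightarrow> 'a \<times> 'a \<Rightarrow> 'a \<times> 'a \<Rightarrow> 'a \<times> 'a" where
  "zs_mult E x y = (case x of (e, s) \<Rightarrow> case y of (f, t) \<Rightarrow>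
      (meetE E e (modal E s f), modal E s f * s * t))"

definition Rest :: "'a::monoid_mult set \<Rightarrow> ('a \<times> 'a) set" where
  "Rest E = {(e, s). e \<in> E \<and> e * s = s}"

definition rest_mult :: "'a::monoid_mult set \<Rightarrow> 'a \<times> 'a \<Rightarrow> 'a \<times> 'a \<Rightarrow> 'a \<times> 'a" where
  "rest_mult E x y = (case x of (e, s) \<Rightarrow> case y of (f, t) \<Rightarrow>
      (let g = meetE E e (modal E s f) in (g, g * s * t)))"

definition Ehat :: "'a::monoid_mult set \<Rightarrow> ('a \<times> 'a) set" where
  "Ehat E = {(e, e) | e. e \<in> E}"

definition left_restriction_on :: "'b set \<Rightarrow> ('b \<Rightarrow> 'b \<Rightarrow> 'b) \<Rightarrow> ('b \<Rightarrow> 'b) \<Rightarrow> bool" where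
  "left_restriction_on T mult D \<longleftrightarrow>
     (\<forall>x\<in>T. \<forall>y\<in>T. mult x y \<in> T) \<and>
     (\<forall>x\<in>T. \<forall>y\<in>T. \<forall>z\<in>T. mult (mult x y) z = mult x (mult y z)) \<and>
     (\<forall>x\<in>T. D x \<in> T) \<and>
     (\<forall>x\<in>T. \<forall>y\<in>T.
        mult (D x) x = x \<and>
        mult (D x) (D y) = mult (D y) (D x) \<and>
        D (mult (D x) y) = mult (D x) (D y) \<and>
        mult x (D y) = mult (D (mult x y)) x)"

end

theory Submission
  imports Defs
begin


lemma le_trans_r: "(a::'a::monoid_mult) * b = a \<Longrightarrow> b * c = b \<Longrightarrow> a * c = a"
  by (metis mult.assoc)

locale ilm =
  fixes E :: "'a::monoid_mult set"
  assumes ilm: "inductive_left_E_monoid E"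
begin

lemma one_E: "1 \<in> E" using ilm by (simp add: inductive_left_E_monoid_def)
lemma idem: "e \<in> E \<Longrightarrow> e * e = e" using ilm by (simp add: inductive_left_E_monoid_def)
lemma rpr: "e \<in> E \<Longrightarrow> f \<in> E \<Longrightarrow> e = e * f \<Longrightarrow> f = f * e \<Longrightarrow> e = f"
  using ilm by (auto simp: inductive_left_E_monoid_def right_pre_reduced_def)
lemma meet_ex: "e \<in> E \<Longrightarrow> f \<in> E \<Longrightarrow> \<exists>m. is_meet E e f m"
  using ilm by (simp add: inductive_left_E_monoid_def)
lemma modal_ex: "e \<in> E \<Longrightarrow> \<exists>u. is_modal E t e u"
  using ilm by (simp add: inductive_left_E_monoid_def)
lemma I2: "e \<in> E \<Longrightarrow> f \<in> E \<Longrightarrow> s * e = s \<Longrightarrow> s * f = s \<Longrightarrow> s * meetE E e f = s"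
  using ilm by (simp add: inductive_left_E_monoid_def)

lemma meet_unique: assumes "is_meet E e f m" "is_meet E e f m'" shows "m = m'"
  using assms rpr unfolding is_meet_def le_r_def by blast

lemma meetE_eq: "is_meet E e f m \<Longrightarrow> meetE E e f = m"
  unfolding meetE_def using meet_unique by blast

lemma meetE_is: "e \<in> E \<Longrightarrow> f \<in> E \<Longrightarrow> is_meet E e f (meetE E e f)"
  using meet_ex meetE_eq by metis

lemma meet_in: "e \<in> E \<Longrightarrow> f \<in> E \<Longrightarrow> meetE E e f \<in> E"
  using meetE_is is_meet_def by blast
lemma meet_le1: "e \<in> E \<Longrightarrow> f \<in> E \<Longrightarrow> meetE E e f * e = meetE E e f"
  using meetE_is unfolding is_meet_def le_r_def by metis
lemma meet_le2: "e \<in> E \<Longrightarrow> f \<in> E \<Longrightarrow> meetE E e f * f = meetE E e f"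
  using meetE_is unfolding is_meet_def le_r_def by metis
lemma meet_glb: "e \<in> E \<Longrightarrow> f \<in> E \<Longrightarrow> g \<in> E \<Longrightarrow> g * e = g \<Longrightarrow> g * f = g \<Longrightarrow> g * meetE E e f = g"
  using meetE_is unfolding is_meet_def le_r_def by metis

lemma meet_char:
  assumes "e \<in> E" "f \<in> E" "m \<in> E" "m * e = m" "m * f = m"
    "\<And>g. g \<in> E \<Longrightarrow> g * e = g \<Longrightarrow> g * f = g \<Longrightarrow> g * m = g"
  shows "meetE E e f = m"
  apply (rule meetE_eq) using assms unfolding is_meet_def le_r_def by metis

lemma modal_unique: assumes "e \<in> E" "is_modal E t e u" "is_modal E t e u'" shows "u = u'"
proof -
  have u: "u \<in> E" "u' \<in> E" using assms is_modal_def by auto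
  have "u * t * e = u * t" using assms(2) idem[OF u(1)] unfolding is_modal_def by metis
  hence 1: "u * u' = u" using assms(3) unfolding is_modal_def by metis
  have "u' * t * e = u' * t" using assms(3) idem[OF u(2)] unfolding is_modal_def by metis
  hence 2: "u' * u = u'" using assms(2) unfolding is_modal_def by metis
  show ?thesis using rpr[OF u] 1 2 by metis
qed

lemma modal_eq: "e \<in> E \<Longrightarrow> is_modal E t e u \<Longrightarrow> modal E t e = u"
  unfolding modal_def using modal_unique by blast

lemma modal_is: "e \<in> E \<Longrightarrow> is_modal E t e (modal E t e)"
  using modal_ex modal_eq by metis

lemma modal_in: "e \<in> E \<Longrightarrow> modal E t e \<in> E"
  using modal_is is_modal_def by blast

lemma modal_iff: "e \<in> E \<Longrightarrow> (s * t * e = s * t) = (s * modal E t e = s)"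
  using modal_is unfolding is_modal_def by blast

lemma modal_a: "e \<in> E \<Longrightarrow> modal E t e * t * e = modal E t e * t"
  using modal_iff idem modal_in by metis

lemma ZS1: "e \<in> E \<Longrightarrow> modal E (s * t) e = modal E s (modal E t e)"
proof (rule modal_eq)
  assume e: "e \<in> E"
  show "is_modal E (s * t) e (modal E s (modal E t e))"
    unfolding is_modal_def
  proof (intro conjI allI)
    show "modal E s (modal E t e) \<in> E" using e modal_in by blast
    fix r
    have "(r * (s * t) * e = r * (s * t)) = (r * s * t * e = r * s * t)" by (simp add: mult.assoc)
    also have "\<dots> = (r * s * modal E t e = r * s)" using modal_iff[OF e, of "r*s" t] .
    also have "\<dots> = (r * modal E s (modal E t e) = r)" using modal_iff[OF modal_in[OF e]] .
    finally show "(r * (s * t) * e = r * (s * t)) = (r * modal E s (modal E t e) = r)" .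
  qed
qed

lemma below_step: "m \<in> E \<Longrightarrow> e \<in> E \<Longrightarrow> m * e = m \<Longrightarrow> u * s * m = u * s \<Longrightarrow> u * s * e = u * s"
  by (metis mult.assoc)

lemma ZS2:
  assumes e: "e \<in> E" and f: "f \<in> E"
  shows "modal E s (meetE E e f) = meetE E (modal E s e) (modal E (restr E s e) f)"
proof -
  define a where "a = modal E s e"
  define m where "m = meetE E e f"
  define u where "u = modal E s m"
  have aE: "a \<in> E" using a_def modal_in e by blast
  have mE: "m \<in> E" using m_def meet_in e f by blast
  have uE: "u \<in> E" using u_def modal_in mE by blast
  have usm: "u * s * m = u * s" using modal_a[OF mE] u_def by simp
  have use: "u * s * e = u * s" using below_step[OF mE e _ usm] meet_le1[OF e f] m_def by simp
  have usf: "u * s * f = u * s" using below_step[OF mE f _ usm] meet_le2[OF e f] m_def by simp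
  have ua: "u * a = u" using modal_iff[OF e] use a_def by metis
  have ub: "u * modal E (a * s) f = u"
  proof -
    have "u * (a * s) * f = u * (a * s)" using ua usf by (metis mult.assoc)
    thus ?thesis using modal_iff[OF f] by metis
  qed
  have "meetE E a (modal E (a * s) f) = u"
  proof (rule meet_char)
    show "a \<in> E" "modal E (a * s) f \<in> E" "u \<in> E" using aE uE modal_in f by auto
    show "u * a = u" "u * modal E (a * s) f = u" using ua ub .
    fix g assume g: "g \<in> E" "g * a = g" "g * modal E (a * s) f = g"
    have gse: "g * s * e = g * s" using modal_iff[OF e] g(2) a_def by metis
    have "g * (a * s) * f = g * (a * s)" using modal_iff[OF f] g(3) by metis
    hence gsf: "g * s * f = g * s" using g(2) by (metis mult.assoc)
    have "g * s * m = g * s" using I2[OF e f, of "g*s"] gse gsf m_def by simp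
    thus "g * u = g" using modal_iff[OF mE] u_def by metis
  qed
  thus ?thesis unfolding u_def m_def a_def restr_def by simp
qed

lemma ZS4: "e \<in> E \<Longrightarrow> restr E (s * t) e = restr E s (modal E t e) * restr E t e"
proof -
  assume e: "e \<in> E"
  define c where "c = modal E t e"
  define w where "w = modal E s c"
  have cE: "c \<in> E" using c_def modal_in e by blast
  have wsc: "w * s * c = w * s" using modal_a[OF cE] w_def by simp
  have "restr E (s * t) e = w * (s * t)" unfolding restr_def w_def c_def using ZS1[OF e] by simp
  also have "\<dots> = w * s * c * t" using wsc by (simp add: mult.assoc)
  also have "\<dots> = restr E s c * restr E t e" unfolding restr_def w_def c_def by (simp add: mult.assoc)
  finally show ?thesis using c_def by simp
qed

lemma modal_one: "e \<in> E \<Longrightarrow> modal E 1 e = e"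
  by (rule modal_eq) (auto simp: is_modal_def)

lemma meet_self_modal: assumes e: "e \<in> E" and f: "f \<in> E"
  shows "meetE E e (modal E e f) = meetE E e f"
proof (rule meet_char)
  show "e \<in> E" "modal E e f \<in> E" "meetE E e f \<in> E" using e f modal_in meet_in by auto
  show m1: "meetE E e f * e = meetE E e f" using meet_le1[OF e f] .
  have "meetE E e f * e * f = meetE E e f * e" using m1 meet_le2[OF e f] by simp
  thus "meetE E e f * modal E e f = meetE E e f" using modal_iff[OF f] m1 by metis
  fix g assume g: "g \<in> E" "g * e = g" "g * modal E e f = g"
  have "g * e * f = g * e" using modal_iff[OF f] g(3) by metis
  hence "g * f = g" using g(2) by simp
  thus "g * meetE E e f = g" using meet_glb[OF e f g(1) g(2)] by simp
qed

lemma dm_meet: assumes e: "e \<in> E" and a: "a \<in> E" and dm: "modal E e a * e \<in> E"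
  shows "modal E e a * e = meetE E e (modal E e a)"
proof -
  define c where "c = modal E e a"
  have cE: "c \<in> E" using c_def modal_in a by blast
  have "meetE E e c = c * e"
  proof (rule meet_char)
    show "e \<in> E" "c \<in> E" "c * e \<in> E" using e cE dm c_def by auto
    show "c * e * e = c * e" using idem[OF e] by (simp add: mult.assoc)
    have "c * e * e * a = c * e" using modal_a[OF a, of e] c_def idem[OF e] by (simp add: mult.assoc)
    hence "c * e * e * a = c * e * e" using idem[OF e] by (simp add: mult.assoc)
    thus "c * e * c = c * e" using modal_iff[OF a] c_def by metis
    fix g assume g: "g \<in> E" "g * e = g" "g * c = g"
    show "g * (c * e) = g" using g by (metis mult.assoc)
  qed
  thus ?thesis using c_def by simp
qed

lemma meet_comm: "e \<in> E \<Longrightarrow> f \<in> E \<Longrightarrow> meetE E e f = meetE E f e"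
  by (rule meet_char) (auto simp: meet_in meet_le1 meet_le2 meet_glb)

lemma meet_idem: "e \<in> E \<Longrightarrow> meetE E e e = e"
  by (rule meet_char) (auto simp: idem)

lemma meet_assoc: assumes x: "x \<in> E" and y: "y \<in> E" and z: "z \<in> E"
  shows "meetE E (meetE E x y) z = meetE E x (meetE E y z)"
proof (rule meet_char)
  let ?m = "meetE E x (meetE E y z)"
  have yz: "meetE E y z \<in> E" using meet_in y z by blast
  show "meetE E x y \<in> E" "z \<in> E" "?m \<in> E" using meet_in x y z yz by auto
  have m1: "?m * x = ?m" using meet_le1[OF x yz] .
  have m2: "?m * meetE E y z = ?m" using meet_le2[OF x yz] .
  have my: "?m * y = ?m" using le_trans_r[OF m2 meet_le1[OF y z]] .
  show "?m * z = ?m" using le_trans_r[OF m2 meet_le2[OF y z]] .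
  show "?m * meetE E x y = ?m" using meet_glb[OF x y meet_in[OF x yz] m1 my] .
  fix g assume g: "g \<in> E" "g * meetE E x y = g" "g * z = g"
  have gx: "g * x = g" using le_trans_r[OF g(2) meet_le1[OF x y]] .
  have gy: "g * y = g" using le_trans_r[OF g(2) meet_le2[OF x y]] .
  have "g * meetE E y z = g" using meet_glb[OF y z g(1) gy g(3)] .
  thus "g * ?m = g" using meet_glb[OF x yz g(1) gx] by simp
qed


lemma restr_one: "e \<in> E \<Longrightarrow> restr E 1 e = e"
  by (simp add: restr_def modal_one)

lemma ZS3_iff: "(\<forall>s. \<forall>e\<in>E. \<forall>f\<in>E. restr E (restr E s e) f = restr E s (meetE E e f))
         \<longleftrightarrow> definable_meets E"
proof
  assume H: "\<forall>s. \<forall>e\<in>E. \<forall>f\<in>E. restr E (restr E s e) f = restr E s (meetE E e f)"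
  show "definable_meets E" unfolding definable_meets_def
  proof (intro ballI)
    fix e f assume e: "e \<in> E" and f: "f \<in> E"
    have "restr E (restr E 1 e) f = restr E 1 (meetE E e f)" using H e f by blast
    hence "modal E e f * e = meetE E e f" using restr_one e meet_in[OF e f] by (simp add: restr_def)
    thus "modal E e f * e \<in> E" using meet_in[OF e f] by simp
  qed
next
  assume dm: "definable_meets E"
  show "\<forall>s. \<forall>e\<in>E. \<forall>f\<in>E. restr E (restr E s e) f = restr E s (meetE E e f)"
  proof (intro allI ballI)
    fix s e f assume e: "e \<in> E" and f: "f \<in> E"
    define a where "a = modal E s e"
    define b where "b = modal E s f"
    have aE: "a \<in> E" and bE: "b \<in> E" using a_def b_def modal_in e f by auto
    have d: "modal E a b * a = meetE E a (modal E a b)"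
      using dm_meet[OF aE bE] dm aE bE unfolding definable_meets_def by blast
    have "restr E (restr E s e) f = modal E (a * s) f * (a * s)" unfolding restr_def a_def ..
    also have "\<dots> = modal E a b * a * s" using ZS1[OF f] b_def by (simp add: mult.assoc)
    also have "\<dots> = meetE E a (modal E a b) * s" using d by simp
    also have "\<dots> = restr E s (meetE E e f)"
      unfolding restr_def using ZS2[OF e f, of s] ZS1[OF f, of a s] a_def b_def
      by (simp add: restr_def)
    finally show "restr E (restr E s e) f = restr E s (meetE E e f)" .
  qed
qed

lemma zs_simp: "zs_mult E (e, s) (f, t) = (meetE E e (modal E s f), modal E s f * s * t)"
  by (simp add: zs_mult_def)

lemma dmE: "definable_meets E \<Longrightarrow> e \<in> E \<Longrightarrow> a \<in> E \<Longrightarrow> modal E e a * e = meetE E e (modal E e a)"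
  using dm_meet unfolding definable_meets_def by blast

lemma zs_assoc:
  assumes dm: "definable_meets E" and e: "e \<in> E" and f: "f \<in> E" and g: "g \<in> E"
  shows "zs_mult E (zs_mult E (e, s) (f, t)) (g, u) = zs_mult E (e, s) (zs_mult E (f, t) (g, u))"
proof -
  define a where "a = modal E s f"
  define c where "c = modal E t g"
  define b where "b = modal E s c"
  define w where "w = meetE E a (modal E a b)"
  have aE: "a \<in> E" and cE: "c \<in> E" and bE: "b \<in> E" using a_def b_def c_def modal_in f g by auto
  have mab: "modal E (a * s * t) g = modal E a b"
    using ZS1[OF g, of "a*s" t] ZS1[OF cE, of a s] b_def c_def by simp
  have ab: "modal E a b * a = w" using dmE[OF dm aE bE] w_def by simp
  have fc: "meetE E f c \<in> E" using meet_in f cE by blast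
  have mw: "modal E s (meetE E f c) = w"
    using ZS2[OF f cE, of s] ZS1[OF cE, of a s] a_def b_def w_def by (simp add: restr_def)
  have wsm: "w * s * meetE E f c = w * s" using modal_a[OF fc, of s] mw by simp
  have wsc: "w * s * c = w * s" using below_step[OF fc cE meet_le2[OF f cE] wsm] .
  have "zs_mult E (zs_mult E (e, s) (f, t)) (g, u)
      = (meetE E (meetE E e a) (modal E a b), modal E a b * (a * s * t) * u)"
    by (simp add: zs_simp a_def[symmetric] mab)
  also have "\<dots> = (meetE E e w, w * s * t * u)"
    using meet_assoc[OF e aE modal_in[OF bE]] ab w_def by (simp add: mult.assoc[symmetric])
  also have "\<dots> = (meetE E e w, w * s * (c * t * u))"
    using wsc by (simp add: mult.assoc[symmetric])
  also have "\<dots> = zs_mult E (e, s) (zs_mult E (f, t) (g, u))"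
    by (simp add: zs_simp c_def[symmetric] mw)
  finally show ?thesis .
qed


lemma rest_part:
  assumes dm: "definable_meets E" and x: "x \<in> Rest E" and y: "y \<in> Rest E"
  shows "zs_mult E x y \<in> Rest E \<and> rest_mult E x y = zs_mult E x y"
proof -
  obtain e s where xe: "x = (e, s)" "e \<in> E" "e * s = s" using x by (auto simp: Rest_def)
  obtain f t where ye: "y = (f, t)" "f \<in> E" "f * t = t" using y by (auto simp: Rest_def)
  define a where "a = modal E s f"
  have aE: "a \<in> E" using a_def modal_in ye by auto
  have "a = modal E (e * s) f" using xe a_def by simp
  hence aa: "modal E e a = a" using ZS1[OF ye(2), of e s] a_def by simp
  have g: "meetE E e a = a * e" using dmE[OF dm xe(2) aE] aa by simp
  have gE: "meetE E e a \<in> E" using meet_in xe(2) aE by blast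
  have ga: "meetE E e a * a = meetE E e a" using meet_le2[OF xe(2) aE] .
  have "a * s = meetE E e a * s" using g xe(3) by (simp add: mult.assoc)
  hence 1: "zs_mult E x y = (meetE E e a, meetE E e a * s * t)"
    using xe ye by (simp add: zs_simp a_def)
  have 2: "rest_mult E x y = (meetE E e a, meetE E e a * s * t)"
    using xe ye by (simp add: rest_mult_def a_def Let_def)
  have "meetE E e a * (meetE E e a * s * t) = meetE E e a * s * t"
    using idem[OF gE] by (simp add: mult.assoc[symmetric])
  thus ?thesis using 1 2 gE by (simp add: Rest_def)
qed

lemma ehat_mult: "definable_meets E \<Longrightarrow> e \<in> E \<Longrightarrow> f \<in> E \<Longrightarrow>
  zs_mult E (e, e) (f, f) = (meetE E e f, meetE E e f)"
  using dmE[of e f] meet_self_modal[of e f] meet_le2[of e f] modal_in[of f e]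
  by (simp add: zs_simp)

lemma last_part:
  assumes dm: "definable_meets E" and T: "T \<subseteq> E \<times> UNIV" and L: "left_restriction_on T (zs_mult E) D"
    and DT: "D ` T = Ehat E"
  shows "T \<subseteq> Rest E"
proof
  fix x assume xT: "x \<in> T"
  obtain e s where xe: "x = (e, s)" "e \<in> E" using T xT by auto
  obtain g where g: "D x = (g, g)" "g \<in> E" using DT xT by (auto simp: Ehat_def)
  have "zs_mult E (D x) x = x" using L xT unfolding left_restriction_on_def by blast
  hence eq: "(meetE E g (modal E g e), modal E g e * g * s) = (e, s)" using g xe by (simp add: zs_simp)
  have m: "meetE E g (modal E g e) = meetE E g e" using meet_self_modal[OF g(2) xe(2)] .
  have "modal E g e * g = meetE E g e" using dmE[OF dm g(2) xe(2)] m by simp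
  hence "e * s = s" using eq m by auto
  thus "x \<in> Rest E" using xe by (simp add: Rest_def)
qed

end


theorem proposition6p2:
  fixes E :: "'a::monoid_mult set"
  assumes "inductive_left_E_monoid E"
  shows "(\<forall>s t. \<forall>e\<in>E. modal E (s * t) e = modal E s (modal E t e))
    \<and> (\<forall>s. \<forall>e\<in>E. \<forall>f\<in>E.
          modal E s (meetE E e f) = meetE E (modal E s e) (modal E (restr E s e) f))
    \<and> (\<forall>s t. \<forall>e\<in>E. restr E (s * t) e = restr E s (modal E t e) * restr E t e)
    \<and> ((\<forall>s. \<forall>e\<in>E. \<forall>f\<in>E. restr E (restr E s e) f = restr E s (meetE E e f))
         \<longleftrightarrow> definable_meets E)
    \<and> (definable_meets E \<longrightarrow>
         (\<forall>x\<in>E \<times> UNIV. \<forall>y\<in>E \<times> UNIV. zs_mult E x y \<in> E \<times> UNIV)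
       \<and> (\<forall>x\<in>E \<times> UNIV. \<forall>y\<in>E \<times> UNIV. \<forall>z\<in>E \<times> UNIV.
            zs_mult E (zs_mult E x y) z = zs_mult E x (zs_mult E y z))
       \<and> Rest E \<subseteq> E \<times> UNIV
       \<and> (\<forall>x\<in>Rest E. \<forall>y\<in>Rest E. zs_mult E x y \<in> Rest E \<and> rest_mult E x y = zs_mult E x y)
       \<and> (\<forall>x\<in>Ehat E. \<forall>y\<in>Ehat E.
            zs_mult E x y \<in> Ehat E \<and> zs_mult E x y = zs_mult E y x \<and> zs_mult E x x = x)
       \<and> bij_betw (\<lambda>e. (e, e)) E (Ehat E)
       \<and> (\<forall>e\<in>E. \<forall>f\<in>E. zs_mult E (e, e) (f, f) = (meetE E e f, meetE E e f))
       \<and> (\<forall>T D. T \<subseteq> E \<times> UNIV \<and> left_restriction_on T (zs_mult E) D \<and> D ` T = Ehat E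
            \<longrightarrow> T \<subseteq> Rest E))"
  proof -
  interpret ilm E using assms by unfold_locales
  have p5: "definable_meets E \<longrightarrow>
         (\<forall>x\<in>E \<times> UNIV. \<forall>y\<in>E \<times> UNIV. zs_mult E x y \<in> E \<times> UNIV)
       \<and> (\<forall>x\<in>E \<times> UNIV. \<forall>y\<in>E \<times> UNIV. \<forall>z\<in>E \<times> UNIV.
            zs_mult E (zs_mult E x y) z = zs_mult E x (zs_mult E y z))
       \<and> Rest E \<subseteq> E \<times> UNIV
       \<and> (\<forall>x\<in>Rest E. \<forall>y\<in>Rest E. zs_mult E x y \<in> Rest E \<and> rest_mult E x y = zs_mult E x y)
       \<and> (\<forall>x\<in>Ehat E. \<forall>y\<in>Ehat E.
            zs_mult E x y \<in> Ehat E \<and> zs_mult E x y = zs_mult E y x \<and> zs_mult E x x = x)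
       \<and> bij_betw (\<lambda>e. (e, e)) E (Ehat E)
       \<and> (\<forall>e\<in>E. \<forall>f\<in>E. zs_mult E (e, e) (f, f) = (meetE E e f, meetE E e f))
       \<and> (\<forall>T D. T \<subseteq> E \<times> UNIV \<and> left_restriction_on T (zs_mult E) D \<and> D ` T = Ehat E
            \<longrightarrow> T \<subseteq> Rest E)"
  proof (intro impI conjI)
    assume dm: "definable_meets E"
    show "\<forall>x\<in>E \<times> UNIV. \<forall>y\<in>E \<times> UNIV. zs_mult E x y \<in> E \<times> UNIV"
      by (auto simp: zs_simp meet_in modal_in)
    show "\<forall>x\<in>E \<times> UNIV. \<forall>y\<in>E \<times> UNIV. \<forall>z\<in>E \<times> UNIV.
            zs_mult E (zs_mult E x y) z = zs_mult E x (zs_mult E y z)"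
      using zs_assoc[OF dm] by auto
    show "Rest E \<subseteq> E \<times> UNIV" by (auto simp: Rest_def)
    show "\<forall>x\<in>Rest E. \<forall>y\<in>Rest E. zs_mult E x y \<in> Rest E \<and> rest_mult E x y = zs_mult E x y"
      using rest_part[OF dm] by blast
    show "\<forall>x\<in>Ehat E. \<forall>y\<in>Ehat E.
            zs_mult E x y \<in> Ehat E \<and> zs_mult E x y = zs_mult E y x \<and> zs_mult E x x = x"
      using ehat_mult[OF dm] meet_comm meet_idem meet_in by (auto simp: Ehat_def)
    show "bij_betw (\<lambda>e. (e, e)) E (Ehat E)"
      by (auto simp: bij_betw_def inj_on_def Ehat_def)
    show "\<forall>e\<in>E. \<forall>f\<in>E. zs_mult E (e, e) (f, f) = (meetE E e f, meetE E e f)"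
      using ehat_mult[OF dm] by blast
    show "\<forall>T D. T \<subseteq> E \<times> UNIV \<and> left_restriction_on T (zs_mult E) D \<and> D ` T = Ehat E
            \<longrightarrow> T \<subseteq> Rest E"
      using last_part[OF dm] by blast
  qed
  show ?thesis
    apply (intro conjI)
        apply (simp add: ZS1)
       apply (simp add: ZS2)
      apply (simp add: ZS4)
     apply (rule ZS3_iff)
    apply (rule p5)
    done
qed

end
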